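(* Let $S=\{s_1,\dots,s_{k_1}\}$ and $T=\{t_1,\dots,t_{k_2}\}$ be nonempty sets of positive integers and $d=\gcd\{s+t: s\in S,t\in T\}$. Then there exist integers $a_1,\dots,a_{k_1},b_1,\dots,b_{k_2}$ such that $$d=\sum_{i=1}^{k_1}a_is_i-\sum_{i=1}^{k_2}b_it_i\quad\text{and}\quad\sum_{i=1}^{k_1}a_i+\sum_{i=1}^{k_2}b_i=0.$$ *)

theory Defs
  imports Main
begin

end

theory Submission
  imports Defs
begin

lemma gcd_comb:
  fixes f :: "'a \<Rightarrow> int"
  assumes "finite P"
  shows "\<exists>c. Gcd (f ` P) = (\<Sum>p\<in>P. c p * f p)"
  using assms
proof (induction P rule: finite_induct)
  case empty
  then show ?case by simp
next
  case (insert x P)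
  then obtain c where c: "Gcd (f ` P) = (\<Sum>p\<in>P. c p * f p)" by blast
  obtain u v where uv: "u * f x + v * Gcd (f ` P) = gcd (f x) (Gcd (f ` P))"
    using bezout_int by blast
  define c' where "c' = (\<lambda>p. if p = x then u else v * c p)"
  have "(\<Sum>p\<in>insert x P. c' p * f p) = u * f x + (\<Sum>p\<in>P. c' p * f p)"
    using insert by (simp add: c'_def)
  also have "(\<Sum>p\<in>P. c' p * f p) = (\<Sum>p\<in>P. v * (c p * f p))"
    using insert by (intro sum.cong) (auto simp: c'_def)
  also have "\<dots> = v * Gcd (f ` P)" by (simp add: c sum_distrib_left)
  finally have "(\<Sum>p\<in>insert x P. c' p * f p) = Gcd (f ` insert x P)" using uv by (simp add: Gcd_insert)
  then show ?case by metis
qed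

theorem lemma4p1:
  fixes S T :: "int set"
  assumes "finite S" and "S \<noteq> {}" and "\<forall>s\<in>S. s > 0"
      and "finite T" and "T \<noteq> {}" and "\<forall>t\<in>T. t > 0"
      and "d = Gcd {s + t | s t. s \<in> S \<and> t \<in> T}"
  shows "\<exists>a b :: int \<Rightarrow> int.
           d = (\<Sum>s\<in>S. a s * s) - (\<Sum>t\<in>T. b t * t) \<and>
           (\<Sum>s\<in>S. a s) + (\<Sum>t\<in>T. b t) = 0"
proof -
  have eq: "{s + t | s t. s \<in> S \<and> t \<in> T} = (\<lambda>(s,t). s + t) ` (S \<times> T)" by auto
  obtain c where c: "d = (\<Sum>p\<in>S \<times> T. c p * (case p of (s,t) \<Rightarrow> s + t))"
    using gcd_comb[of "S \<times> T" "\<lambda>(s,t). s + t"] assms(1,4,7) eq by auto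
  define a where "a = (\<lambda>s. \<Sum>t\<in>T. c (s,t))"
  define b where "b = (\<lambda>t. - (\<Sum>s\<in>S. c (s,t)))"
  have "d = (\<Sum>s\<in>S. \<Sum>t\<in>T. c (s,t) * s) + (\<Sum>s\<in>S. \<Sum>t\<in>T. c (s,t) * t)"
  proof -
    have "(\<Sum>p\<in>S \<times> T. c p * (case p of (s,t) \<Rightarrow> s + t)) = (\<Sum>s\<in>S. \<Sum>t\<in>T. c (s,t) * (s + t))"
      by (simp add: sum.cartesian_product, intro sum.cong, auto)
    then show ?thesis using c by (simp add: distrib_left sum.distrib)
  qed
  also have "(\<Sum>s\<in>S. \<Sum>t\<in>T. c (s,t) * t) = (\<Sum>t\<in>T. \<Sum>s\<in>S. c (s,t) * t)"
    by (rule sum.swap)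
  finally have "d = (\<Sum>s\<in>S. a s * s) - (\<Sum>t\<in>T. b t * t)"
    by (simp add: a_def b_def sum_distrib_right sum_negf)
  moreover have "(\<Sum>s\<in>S. a s) + (\<Sum>t\<in>T. b t) = 0"
    by (simp add: a_def b_def sum_negf sum.swap[of _ S T])
  ultimately show ?thesis by blast
qed

end
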